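(* Let $(X,d)$ be a compact metric space and $f:\mathbb N\to X$ a map whose anqie entropy equals $\lambda$ with $0\le\lambda<+\infty$. Then for every $N\ge1$ there is a map $f_N:\mathbb N\to f(\mathbb N)$ with finite range such that the anqie entropy of $f_N$ is at most $\lambda$ and $\sup_n d(f_N(n),f(n))\le 1/N$. In particular, for every bounded arithmetic function $f$ with $\mathrm{AE}(f)=\lambda<\infty$ and every $N\ge1$ there is an arithmetic function $f_N$ with finite range, $\mathrm{AE}(f_N)\le\lambda$ and $\|f_N-f\|_{l^\infty}\le 1/N$.
   Context: $\mathbb N=\{0,1,2,\ldots\}$. For a compact Hausdorff space $X$ and a map $f:\mathbb N\to X$, let $X_f$ be the closure in $X^{\mathbb N}$ (product topology) of $\{(f(n),f(n+1),f(n+2),\ldots):n\in\mathbb N\}$, and let $B_f$ be the shift $(\omega_0,\omega_1,\ldots)\mapsto(\omega_1,\omega_2,\ldots)$ restricted to $X_f$. The anqie entropy of $f$ is the topological entropy $h(B_f)$. For a bounded $f:\mathbb N\to\mathbb C$ this coincides with $\mathrm{AE}(f)$, the topological entropy of the shift-induced map on the maximal ideal space of the smallest unital C*-subalgebra of $l^\infty(\mathbb N)$ containing $f$ and invariant under $(\sigma_Ag)(n)=g(n+1)$. *)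

theory Defs
  imports "HOL-Analysis.Analysis"
begin

definition shift :: "(nat \<Rightarrow> 'a) \<Rightarrow> (nat \<Rightarrow> 'a)" where
  "shift \<omega> = (\<lambda>n. \<omega> (Suc n))"

text \<open>The orbit closure X_f of (f(n), f(n+1), ...) in the product space
  (the type nat => 'a carries the product topology).\<close>
definition orbit_space :: "(nat \<Rightarrow> 'a::topological_space) \<Rightarrow> (nat \<Rightarrow> 'a) set" where
  "orbit_space f = closure (range (\<lambda>n. (\<lambda>k. f (n + k))))"

definition min_subcover_card :: "'b set \<Rightarrow> 'b set set \<Rightarrow> nat" where
  "min_subcover_card K U = Inf {card V | V. V \<subseteq> U \<and> finite V \<and> K \<subseteq> \<Union>V}"

definition join_cover :: "('b \<Rightarrow> 'b) \<Rightarrow> nat \<Rightarrow> 'b set set \<Rightarrow> 'b set set" where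
  "join_cover T n U = {{x. \<forall>i<n. (T ^^ i) x \<in> A i} | A. \<forall>i<n. A i \<in> U}"

definition cover_entropy :: "'b set \<Rightarrow> ('b \<Rightarrow> 'b) \<Rightarrow> 'b set set \<Rightarrow> ereal" where
  "cover_entropy K T U =
     limsup (\<lambda>n. ereal (ln (real (min_subcover_card K (join_cover T n U))) / real n))"

definition topological_entropy :: "'b::topological_space set \<Rightarrow> ('b \<Rightarrow> 'b) \<Rightarrow> ereal" where
  "topological_entropy K T =
     (SUP U \<in> {U. (\<forall>A\<in>U. open A) \<and> K \<subseteq> \<Union>U}. cover_entropy K T U)"

definition anqie_entropy :: "(nat \<Rightarrow> 'a::topological_space) \<Rightarrow> ereal" where
  "anqie_entropy f = topological_entropy (orbit_space f) shift"

end

theory Submission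
  imports Defs
begin

lemma shift_pow: "(shift ^^ i) \<omega> = (\<lambda>k. \<omega> (i + k))"
  by (induction i arbitrary: \<omega>) (auto simp: shift_def funpow_Suc_right)

lemma cont_shift: "continuous_on UNIV (shift :: (nat \<Rightarrow> 'a::topological_space) \<Rightarrow> _)"
  unfolding shift_def by (intro continuous_on_coordinatewise_then_product) simp

lemma tail_in_orbit: "(\<lambda>k. f (n + k)) \<in> orbit_space f"
  unfolding orbit_space_def by (rule closure_subset[THEN subsetD]) (rule rangeI)

lemma shift_orbit: "shift ` orbit_space (f::nat \<Rightarrow> 'a::topological_space) \<subseteq> orbit_space f"
  unfolding orbit_space_def
proof (rule image_closure_subset)
  show "continuous_on (closure (range (\<lambda>n k. f (n + k)))) shift"
    by (rule continuous_on_subset[OF cont_shift]) simp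
  show "shift ` range (\<lambda>n k. f (n + k)) \<subseteq> closure (range (\<lambda>n k. f (n + k)))"
  proof
    fix x assume "x \<in> shift ` range (\<lambda>n k. f (n + k))"
    then obtain n where "x = (\<lambda>k. f (Suc n + k))" by (auto simp: shift_def)
    then show "x \<in> closure (range (\<lambda>n k. f (n + k)))"
      by (metis closure_subset rangeI subsetD)
  qed
qed (rule closed_closure)

lemma shift_pow_orbit: "\<omega> \<in> orbit_space (f::nat \<Rightarrow> 'a::topological_space) \<Longrightarrow> (shift ^^ i) \<omega> \<in> orbit_space f"
proof (induction i)
  case (Suc i)
  then show ?case using shift_orbit by (metis funpow_Suc_right comp_apply image_subset_iff
    funpow_swap1)
qed simp

lemma orbit_coord: "\<omega> \<in> orbit_space (f::nat \<Rightarrow> 'a::topological_space) \<Longrightarrow> \<omega> i \<in> closure (range f)"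
proof -
  assume a: "\<omega> \<in> orbit_space f"
  have "(\<lambda>\<omega>. \<omega> i) ` closure (range (\<lambda>n k. f (n + k))) \<subseteq> closure (range f)"
  proof (rule image_closure_subset)
    show "continuous_on (closure (range (\<lambda>n k. f (n + k)))) (\<lambda>\<omega>. \<omega> i)"
      by (rule continuous_on_subset[OF continuous_on_product_coordinates]) simp
    show "(\<lambda>\<omega>. \<omega> i) ` range (\<lambda>n k. f (n + k)) \<subseteq> closure (range f)"
      using closure_subset by fastforce
  qed (rule closed_closure)
  with a show ?thesis unfolding orbit_space_def by auto
qed



lemma length_concat_unif: "(\<forall>x\<in>set ws. length x = n) \<Longrightarrow> length (concat ws) = length ws * n"
  by (induction ws) auto

lemma concat_nth_unif:
  "(\<forall>x\<in>set ws. length x = n) \<Longrightarrow> t < length ws \<Longrightarrow> s < n \<Longrightarrow> concat ws ! (t*n + s) = ws!t!s"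
proof (induction ws arbitrary: t)
  case (Cons x ws)
  show ?case
  proof (cases t)
    case 0 then show ?thesis using Cons by (simp add: nth_append)
  next
    case (Suc t')
    then have "concat (x#ws) ! (t*n+s) = concat ws ! (t'*n+s)"
      using Cons.prems by (simp add: nth_append)
    then show ?thesis using Cons Suc by simp
  qed
qed simp

lemma take_drop_concat_unif:
  assumes "\<forall>x\<in>set ws. length x = n" "t < length ws"
  shows "take n (drop (t*n) (concat ws)) = ws!t"
proof (rule nth_equalityI)
  have L: "length (concat ws) = length ws * n" using assms length_concat_unif by blast
  have "(t+1)*n \<le> length ws * n" using assms(2) by (metis Suc_eq_plus1 Suc_leI mult_le_mono1)
  moreover have "length (ws!t) = n" using assms by simp
  ultimately show "length (take n (drop (t*n) (concat ws))) = length (ws!t)"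
    using L assms by auto
  fix i assume "i < length (take n (drop (t*n) (concat ws)))"
  then have i: "i < n" by simp
  have "t*n \<le> length (concat ws)" using L \<open>(t+1)*n \<le> length ws * n\<close>
    by (metis add_leD1 add.commute mult_Suc Suc_eq_plus1)
  then have "take n (drop (t*n) (concat ws)) ! i = concat ws ! (t*n+i)"
    using i by (simp add: nth_drop)
  also have "\<dots> = ws!t!i" using concat_nth_unif assms i by blast
  finally show "take n (drop (t*n) (concat ws)) ! i = ws!t!i" .
qed

lemma block_trans:
  fixes w :: "'a list"
  assumes len: "length w = m * (a * n)" and t: "t < m * a"
  shows "take n (drop (t*n) w) = take n (drop ((t mod a)*n) (take (a*n) (drop ((t div a)*(a*n)) w)))"
proof -
  have a: "0 < a" using t by (cases a) auto
  have e: "t * n = (t div a) * (a*n) + (t mod a) * n"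
    by (metis div_mult_mod_eq mult.assoc mult.commute distrib_right)
  have tm: "t mod a < a" using a by simp
  have b1: "(t mod a) * n + n \<le> a * n" using tm
    by (metis add.commute mult_Suc mult_le_mono1 Suc_leI)
  have "t div a < m" using t by (simp add: div_less_iff_less_mult a mult.commute)
  then have "Suc (t div a) * (a*n) \<le> m * (a*n)" by (intro mult_le_mono1) simp
  then have b2: "(t div a)*(a*n) + a*n \<le> length w" using len by simp
  have b3: "t*n + n \<le> length w" using e b1 b2 by linarith
  show ?thesis
  proof (intro nth_equalityI)
    show "length (take n (drop (t * n) w)) = length (take n (drop (t mod a * n) (take (a * n) (drop (t div a * (a * n)) w))))"
      using b1 b2 b3 by simp
    fix i assume "i < length (take n (drop (t * n) w))"
    then have i: "i < n" by auto
    have "take n (drop (t * n) w) ! i = w ! (t*n+i)" using i b3 by simp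
    moreover have "take n (drop (t mod a * n) (take (a * n) (drop (t div a * (a * n)) w))) ! i
        = w ! ((t div a)*(a*n) + ((t mod a) * n + i))"
    proof -
      have "t mod a * n + i < a * n" using i b1 by linarith
      then have "drop (t mod a * n) (take (a * n) (drop (t div a * (a * n)) w)) ! i
          = take (a * n) (drop (t div a * (a * n)) w) ! (t mod a * n + i)"
        using b2 tm by (subst nth_drop) auto
      also have "\<dots> = drop (t div a * (a * n)) w ! (t mod a * n + i)"
        using \<open>t mod a * n + i < a * n\<close> by simp
      also have "\<dots> = w ! ((t div a)*(a*n) + ((t mod a) * n + i))"
        using b2 by (subst nth_drop) auto
      finally show ?thesis using i by simp
    qed
    ultimately show "take n (drop (t * n) w) ! i = take n (drop (t mod a * n) (take (a * n) (drop (t div a * (a * n)) w))) ! i"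
      using e by (simp add: add.assoc)
  qed
qed



definition Cyl :: "real \<Rightarrow> 'a::metric_space list \<Rightarrow> (nat \<Rightarrow> 'a) set" where
  "Cyl r w = {\<omega>. \<forall>i<length w. dist (w!i) (\<omega> i) < r}"

lemma Cyl_open: "open (Cyl r w)"
proof -
  have "Cyl r w = {\<omega>. \<forall>i\<in>{..<length w}. \<omega> (id i) \<in> ball (w!i) r}"
    by (auto simp: Cyl_def)
  moreover have "open {\<omega>::nat\<Rightarrow>'a. \<forall>i\<in>{..<length w}. \<omega> (id i) \<in> ball (w!i) r}"
    by (rule product_topology_basis') auto
  ultimately show ?thesis by simp
qed

lemma join_finite:
  assumes "finite Q"
  shows "finite (join_cover T p Q)"
proof -
  have "join_cover T p Q \<subseteq> (\<lambda>A. {x. \<forall>i<p. (T ^^ i) x \<in> A i}) ` (PiE {..<p} (\<lambda>_. Q))"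
  proof
    fix S assume "S \<in> join_cover T p Q"
    then obtain A where A: "\<forall>i<p. A i \<in> Q" "S = {x. \<forall>i<p. (T ^^ i) x \<in> A i}"
      unfolding join_cover_def by blast
    then have "restrict A {..<p} \<in> PiE {..<p} (\<lambda>_. Q)" by auto
    moreover have "S = {x. \<forall>i<p. (T ^^ i) x \<in> restrict A {..<p} i}" using A by auto
    ultimately show "S \<in> (\<lambda>A. {x. \<forall>i<p. (T ^^ i) x \<in> A i}) ` (PiE {..<p} (\<lambda>_. Q))" by blast
  qed
  moreover have "finite (PiE {..<p} (\<lambda>_. Q))" using assms by (simp add: finite_PiE)
  ultimately show ?thesis using finite_subset by blast
qed

locale ctx =
  fixes f :: "nat \<Rightarrow> 'a::metric_space" and r :: real and lam :: real and Cen :: "'a set"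
  assumes ent: "topological_entropy (orbit_space f) shift = ereal lam"
    and Cen_fin: "finite Cen" and Cen_sub: "Cen \<subseteq> range f"
    and Cen_cov: "\<And>x. x \<in> closure (range f) \<Longrightarrow> \<exists>c\<in>Cen. dist c x < r"
begin

abbreviation "Y \<equiv> orbit_space f"

definition good :: "nat \<Rightarrow> 'a list set \<Rightarrow> bool" where
  "good n W \<longleftrightarrow> n \<ge> 1 \<and> finite W \<and> (\<forall>w\<in>W. length w = n \<and> set w \<subseteq> Cen) \<and> Y \<subseteq> \<Union>(Cyl r ` W)"

lemma good0: "good 1 ((\<lambda>c. [c]) ` Cen)"
  unfolding good_def
proof (intro conjI)
  show "Y \<subseteq> \<Union>(Cyl r ` (\<lambda>c. [c]) ` Cen)"
  proof
    fix \<omega> assume "\<omega> \<in> Y"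
    then have "\<omega> 0 \<in> closure (range f)" by (rule orbit_coord)
    then obtain c where "c \<in> Cen" "dist c (\<omega> 0) < r" using Cen_cov by blast
    then show "\<omega> \<in> \<Union>(Cyl r ` (\<lambda>c. [c]) ` Cen)" by (auto simp: Cyl_def)
  qed
qed (use Cen_fin in auto)

lemma step:
  assumes g: "good n W" and eps: "0 < \<epsilon>"
  shows "\<exists>m\<ge>2. \<exists>W'. good (m*n) W' \<and> (\<forall>w'\<in>W'. \<forall>t<m. take n (drop (t*n) w') \<in> W)
            \<and> real (card W') \<le> exp ((lam+\<epsilon>) * real (m*n))"
proof -
  define Q where "Q = Cyl r ` W"
  have Qfin: "finite Q" using g by (simp add: good_def Q_def)
  have Qcov: "Y \<subseteq> \<Union>Q" using g by (simp add: good_def Q_def)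
  have "cover_entropy Y shift Q \<le> topological_entropy Y shift"
    unfolding topological_entropy_def
    by (rule SUP_upper) (use Qcov in \<open>auto simp: Q_def Cyl_open\<close>)
  also have "\<dots> < ereal (lam + \<epsilon>)" using ent eps by simp
  finally have "limsup (\<lambda>p. ereal (ln (real (min_subcover_card Y (join_cover shift p Q))) / real p))
       < ereal (lam + \<epsilon>)" unfolding cover_entropy_def .
  from Limsup_lessD[OF this] obtain P where
    P: "\<And>p. p \<ge> P \<Longrightarrow> ln (real (min_subcover_card Y (join_cover shift p Q))) / real p < lam + \<epsilon>"
    unfolding eventually_sequentially by auto
  define m where "m = P + 2"
  define p where "p = m * n"
  have n1: "n \<ge> 1" using g by (simp add: good_def)
  have "P * 1 \<le> (P + 2) * n" using n1 by (intro mult_le_mono) simp_all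
  then have pP: "p \<ge> P" by (simp add: p_def m_def)
  have ppos: "p > 0" using n1 by (simp add: p_def m_def)
  define J where "J = join_cover shift p Q"
  have Jfin: "finite J" unfolding J_def by (rule join_finite[OF Qfin])
  have Jcov: "Y \<subseteq> \<Union>J"
  proof
    fix \<omega> assume \<omega>: "\<omega> \<in> Y"
    define A where "A = (\<lambda>i. SOME q. q \<in> Q \<and> (shift ^^ i) \<omega> \<in> q)"
    have "A i \<in> Q \<and> (shift ^^ i) \<omega> \<in> A i" for i
    proof -
      have "(shift ^^ i) \<omega> \<in> Y" using \<omega> by (rule shift_pow_orbit)
      then have "\<exists>q. q \<in> Q \<and> (shift ^^ i) \<omega> \<in> q" using Qcov by blast
      then show ?thesis unfolding A_def by (rule someI_ex)
    qed
    then have "{x. \<forall>i<p. (shift ^^ i) x \<in> A i} \<in> J" "\<omega> \<in> {x. \<forall>i<p. (shift ^^ i) x \<in> A i}"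
      unfolding J_def join_cover_def by blast+
    then show "\<omega> \<in> \<Union>J" by blast
  qed
  have "{card V | V. V \<subseteq> J \<and> finite V \<and> Y \<subseteq> \<Union>V} \<noteq> {}" using Jfin Jcov by blast
  from Inf_nat_def1[OF this] obtain V where V: "V \<subseteq> J" "finite V" "Y \<subseteq> \<Union>V"
    "card V = min_subcover_card Y J"
    unfolding min_subcover_card_def by auto
  have cardV: "real (card V) \<le> exp ((lam+\<epsilon>) * real p)"
  proof (cases "card V = 0")
    case False
    have "ln (real (card V)) / real p < lam + \<epsilon>" using P[OF pP] V(4) by (simp add: J_def)
    then have "ln (real (card V)) < (lam + \<epsilon>) * real p" using ppos by (simp add: divide_less_eq)
    then have "exp (ln (real (card V))) < exp ((lam + \<epsilon>) * real p)" by simp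
    then show ?thesis using False by simp
  qed simp
  define AS where "AS = (\<lambda>S. SOME A. (\<forall>i<p. A i \<in> Q) \<and> S = {x. \<forall>i<p. (shift ^^ i) x \<in> A i})"
  have AS: "(\<forall>i<p. AS S i \<in> Q) \<and> S = {x. \<forall>i<p. (shift ^^ i) x \<in> AS S i}" if "S \<in> V" for S
  proof -
    have "\<exists>A. (\<forall>i<p. A i \<in> Q) \<and> S = {x. \<forall>i<p. (shift ^^ i) x \<in> A i}"
      using that V(1) unfolding J_def join_cover_def by blast
    then show ?thesis unfolding AS_def by (rule someI_ex)
  qed
  have AS1: "\<forall>i<p. AS S i \<in> Q" if "S \<in> V" for S using AS[OF that] by (rule conjunct1)
  have AS2: "S = {x. \<forall>i<p. (shift ^^ i) x \<in> AS S i}" if "S \<in> V" for S using AS[OF that] by (rule conjunct2)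
  define wd where "wd = (\<lambda>S i. SOME w. w \<in> W \<and> AS S i = Cyl r w)"
  have wd: "wd S i \<in> W \<and> AS S i = Cyl r (wd S i)" if "S \<in> V" "i < p" for S i
  proof -
    have "\<exists>w. w \<in> W \<and> AS S i = Cyl r w" using AS1[OF that(1)] that(2) by (auto simp: Q_def)
    then show ?thesis unfolding wd_def by (rule someI_ex)
  qed
  define \<phi> where "\<phi> = (\<lambda>S. concat (map (\<lambda>t. wd S (t*n)) [0..<m]))"
  define W' where "W' = \<phi> ` V"
  have tn: "t * n < p" if "t < m" for t using that n1 by (simp add: p_def)
  have wdW: "wd S (t*n) \<in> W" if "S \<in> V" "t < m" for S t using wd[OF that(1) tn[OF that(2)]] by blast
  have unif: "\<forall>x\<in>set (map (\<lambda>t. wd S (t*n)) [0..<m]). length x = n" if "S \<in> V" for S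
    using wdW[OF that] g by (auto simp: good_def)
  have lenphi: "length (\<phi> S) = m * n" if "S \<in> V" for S
    using length_concat_unif[OF unif[OF that]] by (simp add: \<phi>_def)
  have blocks: "take n (drop (t*n) (\<phi> S)) = wd S (t*n)" if "S \<in> V" "t < m" for S t
    using take_drop_concat_unif[OF unif[OF that(1)], of t] that(2) by (simp add: \<phi>_def)
  have G: "good (m*n) W'"
    unfolding good_def
  proof (intro conjI)
    show "1 \<le> m * n" using n1 by (simp add: m_def)
    show "finite W'" using V(2) by (simp add: W'_def)
    show "\<forall>w\<in>W'. length w = m * n \<and> set w \<subseteq> Cen"
    proof
      fix w assume "w \<in> W'"
      then obtain S where S: "S \<in> V" "w = \<phi> S" by (auto simp: W'_def)
      have "set w \<subseteq> Cen" using wdW[OF S(1)] g by (auto simp: S(2) \<phi>_def good_def)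
      then show "length w = m * n \<and> set w \<subseteq> Cen" using lenphi[OF S(1)] S(2) by simp
    qed
    show "Y \<subseteq> \<Union>(Cyl r ` W')"
    proof
      fix \<omega> assume "\<omega> \<in> Y"
      then obtain S where S: "S \<in> V" "\<omega> \<in> S" using V(3) by blast
      have "\<omega> \<in> Cyl r (\<phi> S)"
        unfolding Cyl_def
      proof (intro CollectI allI impI)
        fix j assume "j < length (\<phi> S)"
        then have j: "j < m * n" using lenphi[OF S(1)] by simp
        define t where "t = j div n"
        define s where "s = j mod n"
        have t: "t < m" using j n1 by (simp add: t_def div_less_iff_less_mult)
        have s: "s < n" using n1 by (simp add: s_def)
        have jts: "j = t * n + s" by (simp add: t_def s_def)
        have "\<omega> \<in> {x. \<forall>i<p. (shift ^^ i) x \<in> AS S i}"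
          using subst[OF AS2[OF S(1)], of "\<lambda>X. \<omega> \<in> X"] S(2) by blast
        then have "(shift ^^ (t*n)) \<omega> \<in> AS S (t*n)" using tn[OF t] by blast
        then have "(shift ^^ (t*n)) \<omega> \<in> Cyl r (wd S (t*n))" using wd[OF S(1) tn[OF t]] by simp
        moreover have "length (wd S (t*n)) = n" using wdW[OF S(1) t] g by (simp add: good_def)
        ultimately have "dist (wd S (t*n) ! s) (\<omega> (t*n + s)) < r"
          using s by (simp add: Cyl_def shift_pow)
        moreover have "\<phi> S ! j = wd S (t*n) ! s"
          unfolding \<phi>_def jts using concat_nth_unif[OF unif[OF S(1)], of t s] t s by simp
        ultimately show "dist (\<phi> S ! j) (\<omega> j) < r" using jts by simp
      qed
      then show "\<omega> \<in> \<Union>(Cyl r ` W')" using S(1) by (auto simp: W'_def)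
    qed
  qed
  have B: "\<forall>w'\<in>W'. \<forall>t<m. take n (drop (t*n) w') \<in> W"
    using blocks wdW by (auto simp: W'_def)
  have Cd: "real (card W') \<le> exp ((lam+\<epsilon>) * real (m*n))"
  proof -
    have "card W' \<le> card V" unfolding W'_def by (rule card_image_le[OF V(2)])
    then show ?thesis using cardV by (simp add: p_def)
  qed
  have m2: "m \<ge> 2" by (simp add: m_def)
  show ?thesis
    apply (rule exI[of _ m])
    apply (rule conjI[OF m2])
    apply (rule exI[of _ W'])
    using G B Cd by (intro conjI)
qed

end


locale lv = ctx f r lam Cen for f :: "nat \<Rightarrow> 'a::metric_space" and r lam Cen +
  fixes nn :: "nat \<Rightarrow> nat" and WW :: "nat \<Rightarrow> 'a list set" and mm :: "nat \<Rightarrow> nat"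
  assumes gd: "good (nn k) (WW k)"
    and n0: "nn 0 = 1"
    and mm2: "mm k \<ge> 2"
    and nS: "nn (Suc k) = mm k * nn k"
    and blk: "w \<in> WW (Suc k) \<Longrightarrow> t < mm k \<Longrightarrow> take (nn k) (drop (t * nn k) w) \<in> WW k"
    and crd: "real (card (WW (Suc k))) \<le> exp ((lam + 1 / real (Suc k)) * real (nn (Suc k)))"
begin

lemma nn_pos: "nn k \<ge> 1" using gd[of k] by (simp add: good_def)

lemma WW_len: "w \<in> WW k \<Longrightarrow> length w = nn k" using gd[of k] by (simp add: good_def)
lemma WW_set: "w \<in> WW k \<Longrightarrow> set w \<subseteq> Cen" using gd[of k] by (simp add: good_def)
lemma WW_fin: "finite (WW k)" using gd[of k] by (simp add: good_def)
lemma WW_cov: "Y \<subseteq> \<Union>(Cyl r ` WW k)" using gd[of k] by (simp add: good_def)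

lemma nn_Suc_less: "nn k < nn (Suc k)"
proof -
  have "1 * nn k < 2 * nn k" using nn_pos[of k] by simp
  also have "\<dots> \<le> mm k * nn k" using mm2[of k] by (intro mult_le_mono1)
  finally show ?thesis by (simp add: nS)
qed

lemma nn_mono: "k \<le> j \<Longrightarrow> nn k \<le> nn j"
  using nn_Suc_less by (metis less_imp_le lift_Suc_mono_le)

lemma nn_ge: "k < nn k"
proof (induction k)
  case 0 then show ?case by (simp add: n0)
next
  case (Suc k) then show ?case using nn_Suc_less[of k] by simp
qed

lemma nn_dvd: "k \<le> j \<Longrightarrow> nn k dvd nn j"
proof (induction j rule: dec_induct)
  case (step j) then show ?case by (simp add: nS)
qed simp

lemma blk_trans:
  assumes "k \<le> j"
  shows "w \<in> WW j \<Longrightarrow> t < nn j div nn k \<Longrightarrow> take (nn k) (drop (t * nn k) w) \<in> WW k"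
  using assms
proof (induction j arbitrary: w t rule: dec_induct)
  case base
  then have "t = 0" using nn_pos[of k] by simp
  then show ?case using base WW_len by simp
next
  case (step j)
  define a where "a = nn j div nn k"
  have nj: "nn j = a * nn k" using nn_dvd[OF step(1)] by (simp add: a_def)
  have apos: "a > 0" using nj nn_pos[of j] by (cases a) auto
  have len: "length w = mm j * (a * nn k)" using WW_len[OF step(4)] nS nj by simp
  have "nn (Suc j) div nn k = mm j * a" using nS nj nn_pos[of k] by simp
  then have t: "t < mm j * a" using step(5) by simp
  have eq: "take (nn k) (drop (t * nn k) w) = take (nn k) (drop ((t mod a) * nn k) (take (a * nn k) (drop ((t div a) * (a * nn k)) w)))"
    by (rule block_trans[OF len t])
  have "t div a < mm j" using t apos by (simp add: div_less_iff_less_mult mult.commute)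
  then have "take (nn j) (drop ((t div a) * nn j) w) \<in> WW j" using blk step(4) by simp
  then have "take (nn k) (drop ((t mod a) * nn k) (take (nn j) (drop ((t div a) * nn j) w))) \<in> WW k"
    using step(3) apos by (simp add: a_def)
  then show ?case using eq nj by simp
qed

definition lev :: "nat \<Rightarrow> nat" where "lev p = (LEAST j. p < nn (Suc j))"

lemma lev_ex: "p < nn (Suc p)" using nn_ge[of "Suc p"] by simp

lemma lev1: "p < nn (Suc (lev p))"
  unfolding lev_def by (rule LeastI[of "\<lambda>j. p < nn (Suc j)" p, OF lev_ex])

lemma lev2: "lev p = 0 \<or> nn (lev p) \<le> p"
proof (cases "lev p")
  case (Suc i)
  then have "\<not> p < nn (Suc i)" unfolding lev_def by (metis lessI not_less_Least)
  then show ?thesis using Suc by simp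
qed simp

lemma lev_char: "p < nn (Suc j) \<Longrightarrow> (j = 0 \<or> nn j \<le> p) \<Longrightarrow> lev p = j"
proof -
  assume a: "p < nn (Suc j)" "j = 0 \<or> nn j \<le> p"
  have "lev p \<le> j" unfolding lev_def using a(1) by (rule Least_le)
  moreover have "\<not> lev p < j"
  proof
    assume "lev p < j"
    then have "nn (Suc (lev p)) \<le> nn j" by (intro nn_mono) simp
    then show False using lev1[of p] a(2) \<open>lev p < j\<close> by auto
  qed
  ultimately show ?thesis by simp
qed

definition code :: "nat \<Rightarrow> nat \<Rightarrow> 'a list" where
  "code j b = (SOME w. w \<in> WW j \<and> (\<lambda>k. f (b * nn j + k)) \<in> Cyl r w)"

lemma code: "code j b \<in> WW j \<and> (\<lambda>k. f (b * nn j + k)) \<in> Cyl r (code j b)"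
proof -
  have "(\<lambda>k. f (b * nn j + k)) \<in> Y" by (rule tail_in_orbit)
  then have "\<exists>w. w \<in> WW j \<and> (\<lambda>k. f (b * nn j + k)) \<in> Cyl r w" using WW_cov by blast
  then show ?thesis unfolding code_def by (rule someI_ex)
qed

definition g :: "nat \<Rightarrow> 'a" where
  "g p = code (lev p) (p div nn (lev p)) ! (p mod nn (lev p))"

lemma g_prop: "g p \<in> Cen \<and> dist (g p) (f p) < r"
proof -
  define j where "j = lev p"
  define w where "w = code j (p div nn j)"
  have w: "w \<in> WW j" "(\<lambda>k. f ((p div nn j) * nn j + k)) \<in> Cyl r w" using code by (auto simp: w_def)
  have s: "p mod nn j < length w" using WW_len[OF w(1)] nn_pos[of j] by simp
  have "dist (w ! (p mod nn j)) (f ((p div nn j) * nn j + p mod nn j)) < r"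
    using w(2) s unfolding Cyl_def by blast
  then have "dist (w ! (p mod nn j)) (f p) < r" by (simp only: div_mult_mod_eq)
  moreover have "w ! (p mod nn j) \<in> Cen" using WW_set[OF w(1)] s by auto
  ultimately show ?thesis by (simp add: g_def j_def w_def)
qed

end


context lv begin

lemma divmod_aux: "s < d \<Longrightarrow> (q * d + s) div d = q \<and> (q * d + s) mod d = s" for q d s :: nat
proof -
  assume "s < d"
  then have "d \<noteq> 0" by simp
  then show ?thesis using \<open>s < d\<close> by simp
qed

lemma g_block:
  assumes b: "1 \<le> b"
  shows "\<exists>w\<in>WW k. \<forall>s<nn k. g (b * nn k + s) = w ! s"
proof -
  define p0 where "p0 = b * nn k"
  define j where "j = lev p0"
  have p0j: "p0 < nn (Suc j)" using lev1 by (simp add: j_def)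
  have nkp0: "nn k \<le> p0" using b by (simp add: p0_def)
  have jk: "k \<le> j"
  proof (rule ccontr)
    assume "\<not> k \<le> j"
    then have "nn (Suc j) \<le> nn k" by (intro nn_mono) simp
    then show False using p0j nkp0 by simp
  qed
  define a where "a = nn j div nn k"
  have nj: "nn j = a * nn k" using nn_dvd[OF jk] by (simp add: a_def)
  have apos: "a > 0" using nj nn_pos[of j] by (cases a) auto
  define c where "c = nn (Suc j) div nn k"
  have nsj: "nn (Suc j) = c * nn k" using nn_dvd[of k "Suc j"] jk by (simp add: c_def)
  have "b < c" using p0j nsj by (simp add: p0_def)
  then have "Suc b * nn k \<le> c * nn k" by (intro mult_le_mono1) simp
  then have p0n: "p0 + nn k \<le> nn (Suc j)" using nsj by (simp add: p0_def)
  have nkpos: "nn k > 0" using nn_pos[of k] by simp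
  define w0 where "w0 = code j (b div a)"
  have w0: "w0 \<in> WW j" using code by (simp add: w0_def)
  have bm: "b mod a < nn j div nn k" using apos by (simp add: a_def)
  define w where "w = take (nn k) (drop ((b mod a) * nn k) w0)"
  have wW: "w \<in> WW k" unfolding w_def by (rule blk_trans[OF jk w0 bm])
  have bma: "(b mod a) * nn k + nn k \<le> nn j"
  proof -
    have "b mod a < a" using apos by simp
    then have "Suc (b mod a) * nn k \<le> a * nn k" by (intro mult_le_mono1) simp
    then show ?thesis using nj by simp
  qed
  have "\<forall>s<nn k. g (b * nn k + s) = w ! s"
  proof (intro allI impI)
    fix s assume s: "s < nn k"
    have levs: "lev (p0 + s) = j"
      by (rule lev_char) (use p0n s lev2[of p0] j_def in auto)
    have dec: "p0 + s = (b div a) * nn j + ((b mod a) * nn k + s)"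
    proof -
      have "b = (b div a) * a + b mod a" by simp
      then have "b * nn k = ((b div a) * a + b mod a) * nn k" by (rule arg_cong)
      also have "\<dots> = (b div a) * nn j + (b mod a) * nn k" unfolding nj by (simp only: distrib_right mult.assoc)
      finally show ?thesis by (simp add: p0_def)
    qed
    have lt: "(b mod a) * nn k + s < nn j" using bma s by linarith
    have dm: "(p0 + s) div nn j = b div a" "(p0 + s) mod nn j = (b mod a) * nn k + s"
      using divmod_aux[OF lt, of "b div a"] unfolding dec by (simp_all only: add.assoc)
    have "g (p0 + s) = w0 ! ((b mod a) * nn k + s)"
      unfolding g_def levs dm w0_def ..
    also have "\<dots> = w ! s"
    proof -
      have "length w0 = nn j" using WW_len[OF w0] .
      then show ?thesis unfolding w_def using s lt by simp
    qed
    finally show "g (b * nn k + s) = w ! s" by (simp add: p0_def)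
  qed
  then show ?thesis using wW by blast
qed

definition wordsG :: "nat \<Rightarrow> 'a list set" where
  "wordsG L = range (\<lambda>p. map (\<lambda>i. g (p+i)) [0..<L])"

lemma words_bound:
  "finite (wordsG L) \<and> card (wordsG L) \<le> nn k + nn k * card (WW k) ^ (L div nn k + 2)"
proof -
  define n where "n = nn k"
  define q where "q = L div n + 2"
  have npos: "n > 0" using nn_pos[of k] by (simp add: n_def)
  define bw where "bw = (\<lambda>b. SOME w. w \<in> WW k \<and> (\<forall>s<n. g (b*n+s) = w!s))"
  have bw: "bw b \<in> WW k \<and> (\<forall>s<n. g (b*n+s) = bw b ! s)" if "1 \<le> b" for b
    unfolding bw_def n_def by (rule someI_ex) (use g_block[OF that] in blast)
  define S1 where "S1 = (\<lambda>p. map (\<lambda>i. g (p+i)) [0..<L]) ` {..<n}"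
  define LS where "LS = {ws. set ws \<subseteq> WW k \<and> length ws = q}"
  define S2 where "S2 = (\<lambda>(r',ws). take L (drop r' (concat ws))) ` ({..<n} \<times> LS)"
  have sub: "wordsG L \<subseteq> S1 \<union> S2"
  proof
    fix u assume "u \<in> wordsG L"
    then obtain p where u: "u = map (\<lambda>i. g (p+i)) [0..<L]" by (auto simp: wordsG_def)
    show "u \<in> S1 \<union> S2"
    proof (cases "p < n")
      case True then show ?thesis using u by (auto simp: S1_def)
    next
      case False
      define b where "b = p div n"
      define r' where "r' = p mod n"
      have b1: "1 \<le> b" using False npos by (simp add: b_def div_greater_zero_iff Suc_le_eq)
      have r': "r' < n" using npos by (simp add: r'_def)
      have pbr: "p = b * n + r'" by (simp add: b_def r'_def)
      define ws where "ws = map (\<lambda>t. bw (b+t)) [0..<q]"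
      have wsLS: "ws \<in> LS" using bw b1 by (auto simp: LS_def ws_def)
      have unif: "\<forall>x\<in>set ws. length x = n" using bw b1 WW_len by (auto simp: ws_def n_def)
      have lcw: "length (concat ws) = q * n" using length_concat_unif[OF unif] by (simp add: ws_def)
      have Ln: "L < (L div n + 1) * n" using npos
        by (metis div_mult_mod_eq add_less_cancel_left mod_less_divisor distrib_right mult_1)
      have qn: "L + n < q * n" using Ln by (simp add: q_def algebra_simps)
      have "u = take L (drop r' (concat ws))"
      proof (rule nth_equalityI)
        show "length u = length (take L (drop r' (concat ws)))" using u lcw qn r' by simp
        fix i assume "i < length u"
        then have i: "i < L" using u by simp
        define t where "t = (r' + i) div n"
        define s where "s = (r' + i) mod n"
        have s: "s < n" using npos by (simp add: s_def)
        have rits: "r' + i = t * n + s" by (simp add: t_def s_def)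
        have "r' + i < q * n" using r' i qn by linarith
        then have t: "t < q" using npos by (simp add: t_def div_less_iff_less_mult)
        have "take L (drop r' (concat ws)) ! i = concat ws ! (r' + i)"
          using i lcw qn r' by (simp add: nth_drop)
        also have "\<dots> = ws ! t ! s" unfolding rits
          by (rule concat_nth_unif[OF unif]) (use t s in \<open>simp_all add: ws_def\<close>)
        also have "\<dots> = bw (b+t) ! s" using t by (simp add: ws_def)
        also have "\<dots> = g ((b+t)*n + s)" using bw[of "b+t"] b1 s by simp
        also have "(b+t)*n + s = p + i" using pbr rits by (simp add: algebra_simps)
        finally show "u ! i = take L (drop r' (concat ws)) ! i" using u i by simp
      qed
      then show ?thesis using r' wsLS by (auto simp: S2_def)
    qed
  qed
  have fLS: "finite LS" and cLS: "card LS = card (WW k) ^ q"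
    using WW_fin[of k] by (simp_all add: LS_def finite_lists_length_eq card_lists_length_eq)
  have f12: "finite S1" "finite S2" using fLS by (simp_all add: S1_def S2_def)
  have "card S1 \<le> n" unfolding S1_def using card_image_le[of "{..<n}"] by simp
  moreover have "card S2 \<le> n * card (WW k) ^ q"
  proof -
    have "card S2 \<le> card ({..<n} \<times> LS)" unfolding S2_def using fLS by (intro card_image_le) simp
    also have "\<dots> = n * card (WW k) ^ q" by (simp add: card_cartesian_product cLS)
    finally show ?thesis .
  qed
  ultimately have "card (S1 \<union> S2) \<le> n + n * card (WW k) ^ q"
    using card_Un_le[of S1 S2] by linarith
  moreover have "finite (S1 \<union> S2)" using f12 by simp
  ultimately show ?thesis using sub card_mono[of "S1 \<union> S2" "wordsG L"] finite_subset[OF sub]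
    by (simp add: n_def q_def)
qed

end


lemma closed_coord_set:
  assumes "closed F"
  shows "closed {\<omega>::nat \<Rightarrow> 'b::topological_space. \<forall>i. \<omega> i \<in> F}"
proof -
  have "closed ((\<lambda>\<omega>::nat \<Rightarrow> 'b. \<omega> i) -` F \<inter> UNIV)" for i
  proof -
    have "\<forall>B. closed B \<longrightarrow> closed ((\<lambda>\<omega>::nat \<Rightarrow> 'b. \<omega> i) -` B \<inter> UNIV)"
      using continuous_on_closed_vimage[of UNIV "\<lambda>\<omega>::nat \<Rightarrow> 'b. \<omega> i", THEN iffD1, OF closed_UNIV continuous_on_product_coordinates] .
    from this[rule_format, OF assms] show ?thesis .
  qed
  then have "closed (\<Inter>i. (\<lambda>\<omega>::nat \<Rightarrow> 'b. \<omega> i) -` F)" by (intro closed_INT) simp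
  moreover have "(\<Inter>i. (\<lambda>\<omega>::nat \<Rightarrow> 'b. \<omega> i) -` F) = {\<omega>. \<forall>i. \<omega> i \<in> F}" by auto
  ultimately show ?thesis by simp
qed

lemma orbit_fin_sub:
  "orbit_space (g::nat \<Rightarrow> 'b::t1_space) \<subseteq> {\<omega>. \<forall>i. \<omega> i \<in> range g}" if "finite (range g)"
  unfolding orbit_space_def
proof (rule closure_minimal)
  show "closed {\<omega>::nat\<Rightarrow>'b. \<forall>i. \<omega> i \<in> range g}"
    by (rule closed_coord_set) (rule finite_imp_closed[OF that])
qed auto

lemma orbit_fin_compact:
  fixes g :: "nat \<Rightarrow> 'b::t1_space"
  assumes "finite (range g)"
  shows "compact (orbit_space g)"
proof -
  have "compactin (product_topology (\<lambda>i. euclidean) UNIV) (PiE UNIV (\<lambda>_::nat. range g))"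
    using assms by (simp add: compactin_PiE finite_imp_compact)
  then have c: "compact (PiE UNIV (\<lambda>_::nat. range g))"
    by (simp add: euclidean_product_topology)
  have e: "PiE UNIV (\<lambda>_::nat. range g) = {\<omega>. \<forall>i. \<omega> i \<in> range g}" by (auto simp: PiE_iff)
  have "compact (PiE UNIV (\<lambda>_::nat. range g) \<inter> orbit_space g)"
    using c unfolding orbit_space_def by (rule compact_Int_closed) simp
  moreover have "PiE UNIV (\<lambda>_::nat. range g) \<inter> orbit_space g = orbit_space g"
    using orbit_fin_sub[OF assms] e by blast
  ultimately show ?thesis by simp
qed

lemma lebesgue_prod:
  fixes K :: "(nat \<Rightarrow> 'b::topological_space) set"
  assumes K: "compact K" and U: "\<forall>A\<in>U. open A" "K \<subseteq> \<Union>U"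
  shows "\<exists>M. \<forall>\<eta>\<in>K. \<exists>A\<in>U. \<forall>\<eta>'. (\<forall>i<M. \<eta>' i = \<eta> i) \<longrightarrow> \<eta>' \<in> A"
proof -
  define AA where "AA = (\<lambda>\<eta>. SOME A. A \<in> U \<and> \<eta> \<in> A)"
  have AA: "AA \<eta> \<in> U \<and> \<eta> \<in> AA \<eta>" if "\<eta> \<in> K" for \<eta>
    unfolding AA_def by (rule someI_ex) (use that U in blast)
  define P where "P = (\<lambda>\<eta> X. \<eta> \<in> PiE UNIV X \<and> (\<forall>i. open (X i)) \<and> finite {i. X i \<noteq> UNIV} \<and> PiE UNIV X \<subseteq> AA \<eta>)"
  define XX where "XX = (\<lambda>\<eta>. SOME X. P \<eta> X)"
  have XX: "P \<eta> (XX \<eta>)" if "\<eta> \<in> K" for \<eta>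
  proof -
    have "openin (product_topology (\<lambda>i. euclidean) UNIV) (AA \<eta>)"
      using AA[OF that] U by (simp add: open_fun_def)
    from product_topology_open_contains_basis[OF this, of \<eta>] AA[OF that]
    have "\<exists>X. P \<eta> X" by (simp add: P_def)
    then show ?thesis unfolding XX_def by (rule someI_ex)
  qed
  have opB: "open (PiE UNIV (XX \<eta>))" if "\<eta> \<in> K" for \<eta>
    using XX[OF that] by (intro open_PiE) (auto simp: P_def)
  have covB: "K \<subseteq> (\<Union>\<eta>\<in>K. PiE UNIV (XX \<eta>))"
  proof
    fix x assume x: "x \<in> K"
    then have "x \<in> PiE UNIV (XX x)" using XX[OF x] by (simp add: P_def)
    then show "x \<in> (\<Union>\<eta>\<in>K. PiE UNIV (XX \<eta>))" using x by blast
  qed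
  obtain T where T: "T \<subseteq> K" "finite T" "K \<subseteq> (\<Union>\<eta>\<in>T. PiE UNIV (XX \<eta>))"
    using compactE_image[OF K opB covB] by blast
  define SS where "SS = {0} \<union> (\<Union>\<eta>\<in>T. {i. XX \<eta> i \<noteq> UNIV})"
  have fSS: "finite SS" using T XX by (auto simp: SS_def P_def)
  define M where "M = Suc (Max SS)"
  have "\<forall>\<eta>\<in>K. \<exists>A\<in>U. \<forall>\<eta>'. (\<forall>i<M. \<eta>' i = \<eta> i) \<longrightarrow> \<eta>' \<in> A"
  proof
    fix \<eta> assume "\<eta> \<in> K"
    then obtain t where t: "t \<in> T" "\<eta> \<in> PiE UNIV (XX t)" using T by blast
    have Pt: "P t (XX t)" using XX T(1) t(1) by blast
    have "\<forall>\<eta>'. (\<forall>i<M. \<eta>' i = \<eta> i) \<longrightarrow> \<eta>' \<in> AA t"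
    proof (intro allI impI)
      fix \<eta>' assume agree: "\<forall>i<M. \<eta>' i = \<eta> i"
      have "\<eta>' i \<in> XX t i" for i
      proof (cases "XX t i = UNIV")
        case False
        then have "i \<in> SS" using t(1) by (auto simp: SS_def)
        then have "i < M" using fSS by (simp add: M_def le_imp_less_Suc)
        then show ?thesis using agree t(2) by (auto simp: PiE_iff)
      qed simp
      then have "\<eta>' \<in> PiE UNIV (XX t)" by (simp add: PiE_iff)
      then show "\<eta>' \<in> AA t" using Pt by (auto simp: P_def)
    qed
    moreover have "AA t \<in> U" using AA T(1) t(1) by blast
    ultimately show "\<exists>A\<in>U. \<forall>\<eta>'. (\<forall>i<M. \<eta>' i = \<eta> i) \<longrightarrow> \<eta>' \<in> A" by blast
  qed
  then show ?thesis by blast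
qed



lemma limsup_bound:
  fixes a :: "nat \<Rightarrow> real"
  assumes D: "D > 0" and b: "\<And>n. n \<ge> 1 \<Longrightarrow> 1 \<le> a n \<and> a n \<le> D * exp (c * real n)"
  shows "limsup (\<lambda>n. ereal (ln (a n) / real n)) \<le> ereal c"
proof -
  have ev: "eventually (\<lambda>n. ereal (ln (a n) / real n) \<le> ereal (ln D / real n + c)) sequentially"
    unfolding eventually_sequentially
  proof (intro exI[of _ 1] allI impI)
    fix n :: nat assume n: "n \<ge> 1"
    have a1: "a n > 0" using b[OF n] by simp
    have "ln (a n) \<le> ln (D * exp (c * real n))" using b[OF n] a1 by simp
    also have "\<dots> = ln D + c * real n" using D by (simp add: ln_mult)
    finally have "ln (a n) / real n \<le> (ln D + c * real n) / real n"
      using n by (intro divide_right_mono) simp_all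
    also have "\<dots> = ln D / real n + c" using n by (simp add: field_simps)
    finally show "ereal (ln (a n) / real n) \<le> ereal (ln D / real n + c)" by simp
  qed
  have "limsup (\<lambda>n. ereal (ln (a n) / real n)) \<le> limsup (\<lambda>n. ereal (ln D / real n + c))"
    by (rule Limsup_mono[OF ev])
  also have "\<dots> = ereal c"
  proof (rule lim_imp_Limsup)
    have "(\<lambda>n. ln D / real n + c) \<longlonglongrightarrow> 0 + c"
      by (intro tendsto_add lim_const_over_n tendsto_const)
    then show "(\<lambda>n. ereal (ln D / real n + c)) \<longlonglongrightarrow> ereal c" by (simp add: tendsto_ereal)
  qed simp
  finally show ?thesis .
qed

context lv begin

lemma g_fin: "finite (range g)"
proof -
  have "range g \<subseteq> Cen" using g_prop by blast
  then show ?thesis using Cen_fin finite_subset by blast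
qed

lemma prefix_word:
  assumes om: "\<omega> \<in> orbit_space g"
  shows "map \<omega> [0..<L] \<in> wordsG L"
proof -
  define DD where "DD = (\<lambda>(x,y). dist x y) ` {(x,y). x \<in> range g \<and> y \<in> range g \<and> x \<noteq> y}"
  have fDD: "finite DD"
  proof -
    have "{(x,y). x \<in> range g \<and> y \<in> range g \<and> x \<noteq> y} \<subseteq> range g \<times> range g" by blast
    then have "finite {(x,y). x \<in> range g \<and> y \<in> range g \<and> x \<noteq> y}"
      using g_fin finite_subset by blast
    then show ?thesis by (simp add: DD_def)
  qed
  define d where "d = Min (insert 1 DD)"
  have dpos: "d > 0" unfolding d_def using fDD
    by (subst Min_gr_iff) (auto simp: DD_def)
  have dle: "d \<le> dist x y" if "x \<in> range g" "y \<in> range g" "x \<noteq> y" for x y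
  proof -
    have "dist x y \<in> DD" using that by (auto simp: DD_def)
    then show ?thesis unfolding d_def using fDD by (intro Min_le) auto
  qed
  define Nb where "Nb = {\<eta>. \<forall>i\<in>{..<L}. \<eta> (id i) \<in> ball (\<omega> i) d}"
  have "open Nb" unfolding Nb_def by (rule product_topology_basis') auto
  moreover have "\<omega> \<in> Nb" using dpos by (simp add: Nb_def)
  ultimately have "range (\<lambda>n k. g (n + k)) \<inter> Nb \<noteq> {}"
    using om unfolding orbit_space_def closure_iff_nhds_not_empty by blast
  then obtain p where p: "(\<lambda>k. g (p + k)) \<in> Nb" by blast
  have sub: "\<omega> i \<in> range g" for i using orbit_fin_sub[OF g_fin] om by blast
  have "map \<omega> [0..<L] = map (\<lambda>i. g (p+i)) [0..<L]"
  proof (rule map_cong[OF refl])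
    fix i assume "i \<in> set [0..<L]"
    then have "dist (\<omega> i) (g (p+i)) < d" using p by (simp add: Nb_def)
    then show "\<omega> i = g (p+i)" using dle[OF sub[of i], of "g (p+i)"] by force
  qed
  then show ?thesis unfolding wordsG_def by (rule image_eqI) simp
qed

end


context lv begin

lemma wordsG_fin: "finite (wordsG L)" using words_bound[of L 0] by blast

lemma msc_bound:
  assumes Leb: "\<forall>\<eta>\<in>orbit_space g. \<exists>A\<in>U'. \<forall>\<eta>'. (\<forall>i<M. \<eta>' i = \<eta> i) \<longrightarrow> \<eta>' \<in> A"
  shows "1 \<le> min_subcover_card (orbit_space g) (join_cover shift n U') \<and>
         min_subcover_card (orbit_space g) (join_cover shift n U') \<le> card (wordsG (n+M))"
proof -
  define Yg where "Yg = orbit_space g"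
  define Pre where "Pre = (\<lambda>\<omega>. map \<omega> [0..<n+M]) ` Yg"
  have Pre_sub: "Pre \<subseteq> wordsG (n+M)" using prefix_word by (auto simp: Pre_def Yg_def)
  have fPre: "finite Pre" using finite_subset[OF Pre_sub wordsG_fin] .
  define rep where "rep = (\<lambda>u. SOME \<omega>. \<omega> \<in> Yg \<and> map \<omega> [0..<n+M] = u)"
  have rep: "rep u \<in> Yg \<and> map (rep u) [0..<n+M] = u" if "u \<in> Pre" for u
  proof -
    have "\<exists>\<omega>. \<omega> \<in> Yg \<and> map \<omega> [0..<n+M] = u" using that by (auto simp: Pre_def)
    then show ?thesis unfolding rep_def by (rule someI_ex)
  qed
  define Ach where "Ach = (\<lambda>\<eta> i. SOME A. A \<in> U' \<and> (\<forall>\<eta>'. (\<forall>j<M. \<eta>' j = (shift ^^ i) \<eta> j) \<longrightarrow> \<eta>' \<in> A))"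
  have Ach: "Ach \<eta> i \<in> U' \<and> (\<forall>\<eta>'. (\<forall>j<M. \<eta>' j = (shift ^^ i) \<eta> j) \<longrightarrow> \<eta>' \<in> Ach \<eta> i)"
    if "\<eta> \<in> Yg" for \<eta> i
  proof -
    have "(shift ^^ i) \<eta> \<in> Yg" using that unfolding Yg_def by (rule shift_pow_orbit)
    then have "\<exists>A. A \<in> U' \<and> (\<forall>\<eta>'. (\<forall>j<M. \<eta>' j = (shift ^^ i) \<eta> j) \<longrightarrow> \<eta>' \<in> A)"
      using Leb unfolding Yg_def by blast
    then show ?thesis unfolding Ach_def by (rule someI_ex)
  qed
  define JS where "JS = (\<lambda>u. {x. \<forall>i<n. (shift ^^ i) x \<in> Ach (rep u) i})"
  define V where "V = JS ` Pre"
  have Vsub: "V \<subseteq> join_cover shift n U'"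
  proof
    fix S assume "S \<in> V"
    then obtain u where u: "u \<in> Pre" "S = JS u" by (auto simp: V_def)
    have "\<forall>i<n. Ach (rep u) i \<in> U'" using Ach rep[OF u(1)] by blast
    then show "S \<in> join_cover shift n U'" unfolding join_cover_def JS_def u(2) by blast
  qed
  have Vcov: "Yg \<subseteq> \<Union>V"
  proof
    fix x assume x: "x \<in> Yg"
    define u where "u = map x [0..<n+M]"
    have u: "u \<in> Pre" unfolding Pre_def u_def using x by (rule imageI)
    define \<eta> where "\<eta> = rep u"
    have \<eta>: "\<eta> \<in> Yg" "map \<eta> [0..<n+M] = map x [0..<n+M]" using rep[OF u] by (auto simp: \<eta>_def u_def)
    have agree: "\<eta> j = x j" if "j < n+M" for j
      using \<eta>(2) that by auto
    have "x \<in> JS u"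
      unfolding JS_def
    proof (intro CollectI allI impI)
      fix i assume i: "i < n"
      have "\<forall>j<M. (shift ^^ i) x j = (shift ^^ i) \<eta> j" using agree i by (simp add: shift_pow)
      then show "(shift ^^ i) x \<in> Ach (rep u) i" using Ach[OF \<eta>(1), of i] by (simp add: \<eta>_def)
    qed
    then show "x \<in> \<Union>V" using u by (auto simp: V_def)
  qed
  have fV: "finite V" using fPre by (simp add: V_def)
  have cV: "card V \<le> card (wordsG (n+M))"
  proof -
    have "card V \<le> card Pre" unfolding V_def by (rule card_image_le[OF fPre])
    also have "\<dots> \<le> card (wordsG (n+M))" by (rule card_mono[OF wordsG_fin Pre_sub])
    finally show ?thesis .
  qed
  define CS where "CS = {card V | V. V \<subseteq> join_cover shift n U' \<and> finite V \<and> Yg \<subseteq> \<Union>V}"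
  have inCS: "card V \<in> CS" using Vsub fV Vcov by (auto simp: CS_def)
  have "Inf CS \<le> card V" by (rule cInf_lower[OF inCS]) simp
  moreover have "1 \<le> Inf CS"
  proof (rule cInf_greatest)
    show "CS \<noteq> {}" using inCS by blast
    fix c assume "c \<in> CS"
    then obtain V' where V': "c = card V'" "finite V'" "Yg \<subseteq> \<Union>V'" by (auto simp: CS_def)
    have "(\<lambda>k. g (0 + k)) \<in> Yg" unfolding Yg_def by (rule tail_in_orbit)
    then have "V' \<noteq> {}" using V'(3) by blast
    then show "1 \<le> c" using V'(1,2) by (simp add: Suc_le_eq card_gt_0_iff)
  qed
  ultimately show ?thesis using cV unfolding min_subcover_card_def CS_def Yg_def by simp
qed

end


context lv begin

lemma words_real:
  fixes k L :: nat
  assumes lam0: "0 \<le> lam"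
  defines "c \<equiv> lam + 1 / real (Suc k)"
  shows "real (card (wordsG L)) \<le> 2 * real (nn (Suc k)) * exp (2 * c * real (nn (Suc k))) * exp (c * real L)"
proof -
  define n where "n = nn (Suc k)"
  define W where "W = card (WW (Suc k))"
  define q where "q = L div n + 2"
  have c0: "0 \<le> c" using lam0 by (simp add: c_def)
  have npos: "n > 0" using nn_pos[of "Suc k"] by (simp add: n_def)
  have Wb: "real W \<le> exp (c * real n)" using crd[of k] by (simp add: W_def c_def n_def)
  have "real W ^ q \<le> exp (c * real n) ^ q" by (rule power_mono[OF Wb]) simp
  also have "\<dots> = exp (real q * (c * real n))" by (simp add: exp_of_nat_mult)
  also have "\<dots> \<le> exp (c * (real L + 2 * real n))"
  proof -
    have "(L div n) * n \<le> L" by (rule div_times_less_eq_dividend)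
    then have "real q * real n \<le> real L + 2 * real n"
      unfolding q_def by (simp add: distrib_right of_nat_mult[symmetric] del: of_nat_mult)
    then have "real q * (c * real n) \<le> c * (real L + 2 * real n)"
      using c0 by (metis mult.left_commute mult_left_mono mult.commute)
    then show ?thesis by simp
  qed
  finally have Wq: "real W ^ q \<le> exp (c * (real L + 2 * real n))" .
  have e1: "1 \<le> exp (c * (real L + 2 * real n))" using c0 by simp
  have h: "card (wordsG L) \<le> n + n * W ^ q"
    using words_bound[of L "Suc k"] unfolding n_def W_def q_def by blast
  then have "real (card (wordsG L)) \<le> real (n + n * W ^ q)" by (simp only: of_nat_le_iff)
  also have "\<dots> = real n + real n * real W ^ q" by simp
  also have "\<dots> \<le> real n * exp (c * (real L + 2 * real n)) + real n * exp (c * (real L + 2 * real n))"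
    using e1 Wq npos by (intro add_mono mult_left_mono) simp_all
  also have "\<dots> = 2 * real n * exp (2 * c * real n) * exp (c * real L)"
    by (simp add: exp_add[symmetric] algebra_simps)
  finally show ?thesis by (simp add: n_def)
qed

lemma ce_bound:
  assumes lam0: "0 \<le> lam" and U: "\<forall>A\<in>U'. open A" "orbit_space g \<subseteq> \<Union>U'"
  shows "cover_entropy (orbit_space g) shift U' \<le> ereal (lam + 1 / real (Suc k))"
proof -
  define c where "c = lam + 1 / real (Suc k)"
  obtain M where M: "\<forall>\<eta>\<in>orbit_space g. \<exists>A\<in>U'. \<forall>\<eta>'. (\<forall>i<M. \<eta>' i = \<eta> i) \<longrightarrow> \<eta>' \<in> A"
    using lebesgue_prod[OF orbit_fin_compact[OF g_fin] U] by blast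
  define D where "D = 2 * real (nn (Suc k)) * exp (2 * c * real (nn (Suc k))) * exp (c * real M)"
  have Dpos: "D > 0" using nn_pos[of "Suc k"] by (simp add: D_def)
  have "limsup (\<lambda>n. ereal (ln (real (min_subcover_card (orbit_space g) (join_cover shift n U'))) / real n))
        \<le> ereal c"
  proof (rule limsup_bound[OF Dpos])
    fix n :: nat assume "n \<ge> 1"
    have mb: "1 \<le> min_subcover_card (orbit_space g) (join_cover shift n U') \<and>
         min_subcover_card (orbit_space g) (join_cover shift n U') \<le> card (wordsG (n+M))"
      by (rule msc_bound[OF M])
    have "real (card (wordsG (n+M))) \<le> 2 * real (nn (Suc k)) * exp (2 * c * real (nn (Suc k))) * exp (c * real (n+M))"
      using words_real[OF lam0, where k=k and L="n+M"] by (simp add: c_def)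
    also have "\<dots> = D * exp (c * real n)"
      by (simp add: D_def exp_add[symmetric] algebra_simps)
    finally show "1 \<le> real (min_subcover_card (orbit_space g) (join_cover shift n U')) \<and>
        real (min_subcover_card (orbit_space g) (join_cover shift n U')) \<le> D * exp (c * real n)"
      using mb by (metis (mono_tags, lifting) of_nat_le_iff order_trans of_nat_1)
  qed
  then show ?thesis by (simp add: cover_entropy_def c_def)
qed

lemma g_entropy:
  assumes lam0: "0 \<le> lam"
  shows "anqie_entropy g \<le> ereal lam"
  unfolding anqie_entropy_def topological_entropy_def
proof (rule SUP_least)
  fix U' assume U': "U' \<in> {U. (\<forall>A\<in>U. open A) \<and> orbit_space g \<subseteq> \<Union>U}"
  show "cover_entropy (orbit_space g) shift U' \<le> ereal lam"
  proof (rule ereal_le_epsilon2)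
    fix e :: real assume e: "0 < e"
    obtain k where k: "inverse (real (Suc k)) < e" using reals_Archimedean[OF e] by blast
    have "cover_entropy (orbit_space g) shift U' \<le> ereal (lam + 1 / real (Suc k))"
      using ce_bound[OF \<open>0 \<le> lam\<close>] U' by blast
    also have "\<dots> \<le> ereal lam + ereal e" using k by (simp add: inverse_eq_divide)
    finally show "cover_entropy (orbit_space g) shift U' \<le> ereal lam + ereal e" .
  qed
qed

end


lemma (in ctx) lv_exists: "\<exists>nn WW mm. lv f r lam Cen nn WW mm"
proof -
  define P where "P = (\<lambda>(k::nat) (x :: nat \<times> 'a list set). good (fst x) (snd x) \<and> (k = 0 \<longrightarrow> fst x = 1))"
  define Q where "Q = (\<lambda>(k::nat) (x :: nat \<times> 'a list set) (y :: nat \<times> 'a list set).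
      \<exists>m\<ge>2. fst y = m * fst x \<and> (\<forall>w\<in>snd y. \<forall>t<m. take (fst x) (drop (t * fst x) w) \<in> snd x)
        \<and> real (card (snd y)) \<le> exp ((lam + 1 / real (Suc k)) * real (fst y)))"
  have "\<exists>F::nat \<Rightarrow> nat \<times> 'a list set. \<forall>k::nat. P k (F k) \<and> Q k (F k) (F (Suc k))"
  proof (rule dependent_nat_choice)
    show "\<exists>x. P 0 x" using good0 by (intro exI[of _ "(1, (\<lambda>c. [c]) ` Cen)"]) (simp add: P_def)
    fix x and k :: nat assume "P k x"
    then have gx: "good (fst x) (snd x)" by (simp add: P_def)
    have "0 < 1 / real (Suc k)" by simp
    from step[OF gx this] obtain m W' where m: "m \<ge> 2" "good (m * fst x) W'"
      "\<forall>w'\<in>W'. \<forall>t<m. take (fst x) (drop (t * fst x) w') \<in> snd x"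
      "real (card W') \<le> exp ((lam + 1 / real (Suc k)) * real (m * fst x))" by blast
    show "\<exists>y. P (Suc k) y \<and> Q k x y"
    proof (rule exI[of _ "(m * fst x, W')"], rule conjI)
      show "P (Suc k) (m * fst x, W')" using m(2) by (simp add: P_def)
      show "Q k x (m * fst x, W')" unfolding Q_def fst_conv snd_conv
        using m by blast
    qed
  qed
  then obtain F where F: "\<And>k. P k (F k)" "\<And>k. Q k (F k) (F (Suc k))" by blast
  define nn where "nn = (\<lambda>k. fst (F k))"
  define WW where "WW = (\<lambda>k. snd (F k))"
  define mm where "mm = (\<lambda>k. SOME m. m \<ge> 2 \<and> nn (Suc k) = m * nn k \<and>
      (\<forall>w\<in>WW (Suc k). \<forall>t<m. take (nn k) (drop (t * nn k) w) \<in> WW k))"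
  have mm: "mm k \<ge> 2 \<and> nn (Suc k) = mm k * nn k \<and>
      (\<forall>w\<in>WW (Suc k). \<forall>t<mm k. take (nn k) (drop (t * nn k) w) \<in> WW k)" for k
  proof -
    have "\<exists>m. m \<ge> 2 \<and> nn (Suc k) = m * nn k \<and>
      (\<forall>w\<in>WW (Suc k). \<forall>t<m. take (nn k) (drop (t * nn k) w) \<in> WW k)"
      using F(2)[of k] by (auto simp: Q_def nn_def WW_def)
    then show ?thesis unfolding mm_def by (rule someI_ex)
  qed
  have crd: "real (card (WW (Suc k))) \<le> exp ((lam + 1 / real (Suc k)) * real (nn (Suc k)))" for k
    using F(2)[of k] by (auto simp: Q_def nn_def WW_def)
  have "lv f r lam Cen nn WW mm"
  proof (intro lv.intro ctx_axioms lv_axioms.intro)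
    show "good (nn k) (WW k)" for k using F(1)[of k] by (simp add: P_def nn_def WW_def)
    show "nn 0 = 1" using F(1)[of 0] by (simp add: P_def nn_def)
    show "mm k \<ge> 2" for k using mm by blast
    show "nn (Suc k) = mm k * nn k" for k using mm by blast
    show "take (nn k) (drop (t * nn k) w) \<in> WW k" if "w \<in> WW (Suc k)" "t < mm k" for w t k
      using mm[of k] that by blast
    show "real (card (WW (Suc k))) \<le> exp ((lam + 1 / real (Suc k)) * real (nn (Suc k)))" for k
      by (rule crd)
  qed
  then show ?thesis by blast
qed

lemma main1:
  fixes X :: "'a::metric_space set" and f :: "nat \<Rightarrow> 'a" and lam :: real and N :: nat
  assumes X: "compact X" "range f \<subseteq> X" and lam0: "0 \<le> lam"
    and ent: "anqie_entropy f = ereal lam" and N: "N \<ge> 1"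
  shows "\<exists>fN :: nat \<Rightarrow> 'a. range fN \<subseteq> range f \<and> finite (range fN) \<and>
          anqie_entropy fN \<le> ereal lam \<and> (\<forall>n. dist (fN n) (f n) \<le> 1 / real N)"
proof -
  define r where "r = 1 / real N"
  have rpos: "r > 0" using N by (simp add: r_def)
  have "closure (range f) \<subseteq> X"
    using X compact_imp_closed closure_minimal by blast
  then have cc: "compact (closure (range f))"
    using compact_Int_closed[OF X(1) closed_closure, of "range f"] by (simp add: Int_absorb1)
  have cov: "closure (range f) \<subseteq> (\<Union>c\<in>range f. ball c r)"
  proof
    fix x assume "x \<in> closure (range f)"
    then obtain y where "y \<in> range f" "dist y x < r" using rpos closure_approachable by blast
    then show "x \<in> (\<Union>c\<in>range f. ball c r)" by auto
  qed
  obtain Cen where Cen: "Cen \<subseteq> range f" "finite Cen" "closure (range f) \<subseteq> (\<Union>c\<in>Cen. ball c r)"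
    using compactE_image[OF cc _ cov] by blast
  have "ctx f r lam Cen"
  proof
    show "topological_entropy (orbit_space f) shift = ereal lam" using ent by (simp add: anqie_entropy_def)
    show "finite Cen" "Cen \<subseteq> range f" using Cen by auto
    show "\<exists>c\<in>Cen. dist c x < r" if "x \<in> closure (range f)" for x
    proof -
      have "x \<in> (\<Union>c\<in>Cen. ball c r)" using Cen(3) that by (rule subsetD)
      then show ?thesis by simp
    qed
  qed
  then interpret C: ctx f r lam Cen .
  obtain nn WW mm where "lv f r lam Cen nn WW mm" using C.lv_exists by blast
  then interpret L: lv f r lam Cen nn WW mm .
  have "range L.g \<subseteq> range f" using L.g_prop Cen(1) by blast
  moreover have "finite (range L.g)" by (rule L.g_fin)
  moreover have "anqie_entropy L.g \<le> ereal lam" by (rule L.g_entropy[OF lam0])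
  moreover have "\<forall>n. dist (L.g n) (f n) \<le> 1 / real N" using L.g_prop by (simp add: r_def less_imp_le)
  ultimately show ?thesis by blast
qed

theorem theorem6p3:
  shows
   "(\<forall>(X :: 'a::metric_space set) (f :: nat \<Rightarrow> 'a) (lam::real) (N::nat).
       compact X \<and> range f \<subseteq> X \<and> 0 \<le> lam \<and> anqie_entropy f = ereal lam \<and> N \<ge> 1 \<longrightarrow>
       (\<exists>fN :: nat \<Rightarrow> 'a. range fN \<subseteq> range f \<and> finite (range fN) \<and>
          anqie_entropy fN \<le> ereal lam \<and> (\<forall>n. dist (fN n) (f n) \<le> 1 / real N)))
    \<and>
    (\<forall>(f :: nat \<Rightarrow> complex) (lam::real) (N::nat).
       bounded (range f) \<and> 0 \<le> lam \<and> anqie_entropy f = ereal lam \<and> N \<ge> 1 \<longrightarrow>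
       (\<exists>fN :: nat \<Rightarrow> complex. finite (range fN) \<and>
          anqie_entropy fN \<le> ereal lam \<and> (\<forall>n. norm (fN n - f n) \<le> 1 / real N)))"
proof (intro conjI allI impI)
  fix X :: "'a set" and f :: "nat \<Rightarrow> 'a" and lam :: real and N :: nat
  assume "compact X \<and> range f \<subseteq> X \<and> 0 \<le> lam \<and> anqie_entropy f = ereal lam \<and> N \<ge> 1"
  then show "\<exists>fN :: nat \<Rightarrow> 'a. range fN \<subseteq> range f \<and> finite (range fN) \<and>
          anqie_entropy fN \<le> ereal lam \<and> (\<forall>n. dist (fN n) (f n) \<le> 1 / real N)"
    using main1[of X f lam N] by blast
next
  fix f :: "nat \<Rightarrow> complex" and lam :: real and N :: nat
  assume a: "bounded (range f) \<and> 0 \<le> lam \<and> anqie_entropy f = ereal lam \<and> N \<ge> 1"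
  then obtain e x where ex: "range f \<subseteq> cball x e" using bounded_subset_cball by blast
  have "compact (cball x e)" by (rule compact_cball)
  then obtain fN :: "nat \<Rightarrow> complex" where "finite (range fN)" "anqie_entropy fN \<le> ereal lam"
      "\<forall>n. dist (fN n) (f n) \<le> 1 / real N"
    using main1[of "cball x e" f lam N] a ex by blast
  then show "\<exists>fN :: nat \<Rightarrow> complex. finite (range fN) \<and>
          anqie_entropy fN \<le> ereal lam \<and> (\<forall>n. norm (fN n - f n) \<le> 1 / real N)"
    by (auto simp: dist_norm)
qed


end
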